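(* Let $\hat x\in\mathcal{X}$, $\hat y:=K\hat x$, and let the measurements be $Y_i=\hat y+E_i$, $i=1,2,\dots$, where $E_1,E_2,\dots$ are i.i.d. $\mathcal{Y}$-valued random variables whose distribution does not depend on $\hat x$, with $\mathbb{E}[E_1]=0$ and $\mathbb{E}\|E_1\|^2<\infty$. Assume there are $q>0$, $p>1$ with $\sigma_j^2\asymp j^{-q}$ and $\mathbb{E}(E_1,u_j)^2\asymp j^{-p}$. Let $\nu,\rho>0$. Then, as $n\to\infty$, $$\inf_{k\ge 1}\sup_{\hat x\in\mathcal{X}_{\nu,\rho}}\mathbb{E}\|\bar X^n_k-\hat x\|^2\asymp\begin{cases}\frac1n & q-p<-1,\\ \frac{\log(n\rho)}{n} & q-p=-1,\\ \rho^{\frac{q+1-p}{(\nu+1)q+1-p}}\left(\frac1n\right)^{\frac{\nu}{\nu+1-\frac{p-1}{q}}} & q-p>-1.\end{cases}$$ Moreover, for any choice of truncation levels $$k_n\asymp\begin{cases}(\rho n)^{\frac{1}{\nu q}} & q-p\le -1,\\ (\rho n)^{\frac{1}{(1+\nu)q+1-p}} & q-p>-1,\end{cases}$$ one has $\sup_{\hat x\in\mathcal{X}_{\nu,\rho}}\mathbb{E}\|\bar X^n_{k_n}-\hat x\|^2\asymp\inf_{k\ge1}\sup_{\hat x\in\mathcal{X}_{\nu,\rho}}\mathbb{E}\|\bar X^n_k-\hat x\|^2$.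
   Context: $\mathcal{X},\mathcal{Y}$ are infinite-dimensional real separable Hilbert spaces and $K:\mathcal{X}\to\mathcal{Y}$ is a compact linear operator with dense range, with singular value decomposition $(\sigma_j,u_j,v_j)_{j\in\mathbb{N}}$: $(u_j)$ is an orthonormal basis of $\mathcal{Y}$, $(v_j)$ an orthonormal basis of $\mathcal{N}(K)^\perp$, $(\sigma_j)$ is a nonincreasing sequence of positive numbers converging to $0$, and $Kv_j=\sigma_ju_j$. For $\nu,\rho>0$ the source set is $\mathcal{X}_{\nu,\rho}:=\{(K^*K)^{\nu/2}\xi:\xi\in\mathcal{X},\|\xi\|\le\rho\}=\{\sum_{j}\sigma_j^\nu(\xi,v_j)v_j:\|\xi\|\le\rho\}$. Given measurements $Y_1,\dots,Y_n$, $\bar Y_n:=\frac1n\sum_{i=1}^nY_i$ and the spectral cut-off estimator at level $k$ is $\bar X^n_k:=\sum_{j=1}^k\sigma_j^{-1}(\bar Y_n,u_j)v_j$. For positive sequences, $a_j\asymp b_j$ means $c\,b_j\le a_j\le C\,b_j$ for constants $0<c\le C$ independent of the index; in the conclusion the constants are independent of $n$ (they may depend on $p,q,\nu,\rho$ and the noise distribution). *)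

theory Defs
  imports "HOL-Probability.Probability"
begin

definition asymp_all :: "(nat \<Rightarrow> real) \<Rightarrow> (nat \<Rightarrow> real) \<Rightarrow> bool" where
  "asymp_all f g \<longleftrightarrow> (\<exists>c C. 0 < c \<and> c \<le> C \<and> (\<forall>j. c * g j \<le> f j \<and> f j \<le> C * g j))"

definition asymp_ev :: "(nat \<Rightarrow> real) \<Rightarrow> (nat \<Rightarrow> real) \<Rightarrow> bool" where
  "asymp_ev f g \<longleftrightarrow> (\<exists>c C. 0 < c \<and> c \<le> C \<and>
       (\<forall>\<^sub>F n in sequentially. c * g n \<le> f n \<and> f n \<le> C * g n))"

definition orthonormal_seq :: "(nat \<Rightarrow> 'a::real_inner) \<Rightarrow> bool" where
  "orthonormal_seq e \<longleftrightarrow> (\<forall>i j. inner (e i) (e j) = (if i = j then 1 else 0))"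

definition orthonormal_basis_of :: "(nat \<Rightarrow> 'a::real_inner) \<Rightarrow> 'a set \<Rightarrow> bool" where
  "orthonormal_basis_of e S \<longleftrightarrow> orthonormal_seq e \<and> closure (span (range e)) = S"

definition ker_perp :: "('x::real_inner \<Rightarrow> 'y::real_vector) \<Rightarrow> 'x set" where
  "ker_perp K = {x. \<forall>z. K z = 0 \<longrightarrow> inner x z = 0}"

definition source_set :: "(nat \<Rightarrow> real) \<Rightarrow> (nat \<Rightarrow> 'x::real_inner) \<Rightarrow> real \<Rightarrow> real \<Rightarrow> 'x set" where
  "source_set \<sigma> v \<nu> \<rho> =
     {x. \<exists>\<xi>. norm \<xi> \<le> \<rho> \<and> (\<lambda>j. (\<sigma> j powr \<nu> * inner \<xi> (v j)) *\<^sub>R v j) sums x}"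

text \<open>Sample mean of Y_i = K xh + E_i, i = 1..n (indices shifted to 0..n-1).\<close>
definition Ybar :: "('x \<Rightarrow> 'y::real_vector) \<Rightarrow> (nat \<Rightarrow> 'w \<Rightarrow> 'y) \<Rightarrow> 'x \<Rightarrow> nat \<Rightarrow> 'w \<Rightarrow> 'y" where
  "Ybar K E xh n \<omega> = (1 / real n) *\<^sub>R (\<Sum>i<n. K xh + E i \<omega>)"

definition sc_est :: "('x::real_vector \<Rightarrow> 'y::real_inner) \<Rightarrow> (nat \<Rightarrow> real) \<Rightarrow> (nat \<Rightarrow> 'y) \<Rightarrow> (nat \<Rightarrow> 'x)
    \<Rightarrow> (nat \<Rightarrow> 'w \<Rightarrow> 'y) \<Rightarrow> 'x \<Rightarrow> nat \<Rightarrow> nat \<Rightarrow> 'w \<Rightarrow> 'x" where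
  "sc_est K \<sigma> u v E xh n k \<omega> = (\<Sum>j<k. (inverse (\<sigma> j) * inner (Ybar K E xh n \<omega>) (u j)) *\<^sub>R v j)"

definition sc_risk :: "'w measure \<Rightarrow> ('x::real_inner \<Rightarrow> 'y::real_inner) \<Rightarrow> (nat \<Rightarrow> real) \<Rightarrow> (nat \<Rightarrow> 'y) \<Rightarrow> (nat \<Rightarrow> 'x)
    \<Rightarrow> (nat \<Rightarrow> 'w \<Rightarrow> 'y) \<Rightarrow> 'x \<Rightarrow> nat \<Rightarrow> nat \<Rightarrow> real" where
  "sc_risk M K \<sigma> u v E xh n k = (\<integral>\<omega>. (norm (sc_est K \<sigma> u v E xh n k \<omega> - xh))\<^sup>2 \<partial>M)"

end

theory Submission
  imports Defs "HOL-Real_Asymp.Real_Asymp"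
begin

lemma mvt_pow_step:
  fixes s x :: real
  assumes "s > 0" "x \<ge> 1"
  obtains z where "x < z" "z < x + 1" "(x+1) powr s - x powr s = s * z powr (s - 1)"
proof -
  have "\<exists>z>x. z < x + 1 \<and> (x+1) powr s - x powr s = (x + 1 - x) * (s * z powr (s - 1))"
    using assms by (intro MVT2) (auto intro!: derivative_eq_intros)
  then show ?thesis using that by auto
qed

lemma step_ge0:
  fixes r :: real assumes "r \<ge> 0"
  shows "real (Suc j) powr (r+1) - real j powr (r+1) \<le> (r+1) * real (Suc j) powr r"
proof (cases "j = 0")
  case True then show ?thesis using assms by simp
next
  case False
  then have j1: "real j \<ge> 1" by simp
  obtain z where z: "real j < z" "z < real j + 1" "(real j+1) powr (r+1) - real j powr (r+1) = (r+1) * z powr r"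
    using mvt_pow_step[of "r+1" "real j"] j1 assms by auto
  have "z powr r \<le> real (Suc j) powr r" using z assms j1 by (intro powr_mono2) auto
  then show ?thesis using z assms by (simp add: add.commute)
qed

lemma step_lt0:
  fixes r :: real assumes "r < 0" "r > -1"
  shows "(r+1) * real (Suc j) powr r \<le> real (Suc j) powr (r+1) - real j powr (r+1)"
proof (cases "j = 0")
  case True then show ?thesis using assms by simp
next
  case False
  then have j1: "real j \<ge> 1" by simp
  obtain z where z: "real j < z" "z < real j + 1" "(real j+1) powr (r+1) - real j powr (r+1) = (r+1) * z powr r"
    using mvt_pow_step[of "r+1" "real j"] j1 assms by auto
  have "real (Suc j) powr r \<le> z powr r" using z assms j1 by (intro powr_mono2') auto
  then show ?thesis using z assms by (simp add: add.commute)
qed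

lemma telesc: "(\<Sum>j<k. real (Suc j) powr s - real j powr s) = real k powr s" for s :: real
  using sum_lessThan_telescope[of "\<lambda>j. real j powr s" k] by simp

lemma sum_pow_bounds:
  fixes r :: real assumes "r > -1"
  shows "\<exists>cT CT. 0 < cT \<and> 0 < CT \<and> (\<forall>k. cT * real k powr (r+1) \<le> (\<Sum>j<k. real (Suc j) powr r)
           \<and> (\<Sum>j<k. real (Suc j) powr r) \<le> CT * real k powr (r+1))"
proof (cases "r \<ge> 0")
  case True
  have lo: "real k powr (r+1) / (r+1) \<le> (\<Sum>j<k. real (Suc j) powr r)" for k
  proof -
    have "real k powr (r+1) = (\<Sum>j<k. real (Suc j) powr (r+1) - real j powr (r+1))" by (rule telesc[symmetric])
    also have "\<dots> \<le> (\<Sum>j<k. (r+1) * real (Suc j) powr r)" by (intro sum_mono step_ge0 True)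
    also have "\<dots> = (r+1) * (\<Sum>j<k. real (Suc j) powr r)" by (simp add: sum_distrib_left)
    finally show ?thesis using assms by (simp add: field_simps)
  qed
  have hi: "(\<Sum>j<k. real (Suc j) powr r) \<le> real k powr (r+1)" for k
  proof -
    have "(\<Sum>j<k. real (Suc j) powr r) \<le> (\<Sum>j<k. real k powr r)"
      using True by (intro sum_mono powr_mono2) auto
    also have "\<dots> = real k powr (r+1)" by (cases "k = 0") (simp_all add: powr_add)
    finally show ?thesis .
  qed
  show ?thesis using lo hi assms
    by (intro exI[of _ "1/(r+1)"] exI[of _ 1]) (auto simp: field_simps)
next
  case False
  have hi: "(\<Sum>j<k. real (Suc j) powr r) \<le> real k powr (r+1) / (r+1)" for k
  proof -
    have "(\<Sum>j<k. (r+1) * real (Suc j) powr r) \<le> (\<Sum>j<k. real (Suc j) powr (r+1) - real j powr (r+1))"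
      using False assms by (intro sum_mono step_lt0) auto
    also have "\<dots> = real k powr (r+1)" by (rule telesc)
    also have "(\<Sum>j<k. (r+1) * real (Suc j) powr r) = (r+1) * (\<Sum>j<k. real (Suc j) powr r)" by (simp add: sum_distrib_left)
    finally show ?thesis using assms by (simp add: field_simps)
  qed
  have lo: "real k powr (r+1) \<le> (\<Sum>j<k. real (Suc j) powr r)" for k
  proof -
    have "(\<Sum>j<k. real k powr r) \<le> (\<Sum>j<k. real (Suc j) powr r)"
      using False by (intro sum_mono powr_mono2') auto
    moreover have "(\<Sum>j<k. real k powr r) = real k powr (r+1)" by (cases "k = 0") (simp_all add: powr_add)
    ultimately show ?thesis by simp
  qed
  show ?thesis using lo hi assms
    by (intro exI[of _ 1] exI[of _ "1/(r+1)"]) (auto simp: field_simps)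
qed

lemma harm_upper: "k \<ge> 1 \<Longrightarrow> (\<Sum>j<k. real (Suc j) powr (-1)) \<le> 1 + ln (real k)"
proof (induction k rule: dec_induct)
  case base then show ?case by simp
next
  case (step k)
  have "1 / real (Suc k) \<le> ln (real (Suc k)) - ln (real k)"
  proof -
    have "ln (real k / real (Suc k)) \<le> real k / real (Suc k) - 1"
      using step by (intro ln_le_minus_one) auto
    also have "\<dots> = - 1 / real (Suc k)" by (simp add: field_simps)
    finally have "ln (real k) - ln (real (Suc k)) \<le> - 1 / real (Suc k)"
      using step by (simp add: ln_div)
    then show ?thesis by simp
  qed
  then show ?case using step by (simp add: powr_minus_divide)
qed

lemma harm_lower: "ln (real k + 1) \<le> (\<Sum>j<k. real (Suc j) powr (-1))"
proof -
  have "(\<Sum>j<k. real (Suc j) powr (-1)) = harm k"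
    by (simp add: harm_altdef powr_minus_divide divide_inverse)
  then show ?thesis using ln_le_harm[of k] by simp
qed

lemma sum_pow_summ:
  fixes r :: real assumes "r < -1"
  shows "\<exists>S. \<forall>k. (\<Sum>j<k. real (Suc j) powr r) \<le> S"
proof -
  have "summable (\<lambda>j. real j powr r)" using assms summable_real_powr_iff by blast
  then have s: "summable (\<lambda>j. real (Suc j) powr r)" using summable_Suc_iff[of "\<lambda>j. real j powr r"] by simp
  show ?thesis by (rule exI[of _ "suminf (\<lambda>j. real (Suc j) powr r)"], intro allI sum_le_suminf[OF s]) auto
qed

lemma powr_pow_div: "0 < n \<Longrightarrow> (n powr (1/D)) powr x = n powr (x / D)" for n D x :: real
  by (simp add: powr_powr)

lemma powr_neg_mono: "0 < x \<Longrightarrow> x \<le> y \<Longrightarrow> a \<ge> 0 \<Longrightarrow> y powr (-a) \<le> x powr (-a)" for x y a :: real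
  by (intro powr_mono2') auto

locale asy =
  fixes b V :: "nat \<Rightarrow> real" and q p \<nu> \<rho> cb Cb cV CV :: real
  assumes q: "q>0" and \<nu>: "\<nu>>0" and \<rho>: "\<rho>>0" and cb: "cb>0" and Cb: "Cb > 0" and cV: "cV>0" and CV: "CV > 0"
   and bl: "\<And>k. cb * real (Suc k) powr (-(q*\<nu>)) \<le> b k"
   and bu: "\<And>k. b k \<le> Cb * real (Suc k) powr (-(q*\<nu>))"
   and vl: "\<And>k. cV * (\<Sum>j<k. real (Suc j) powr (q-p)) \<le> V k"
   and vu: "\<And>k. V k \<le> CV * (\<Sum>j<k. real (Suc j) powr (q-p))"
begin

lemma b_nonneg: "b k \<ge> 0"
  using bl[of k] cb by (smt (verit) mult_nonneg_nonneg powr_ge_zero)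

lemma V_nonneg: "V k \<ge> 0"
proof -
  have "(\<Sum>j<k. real (Suc j) powr (q-p)) \<ge> 0" by (intro sum_nonneg) auto
  then show ?thesis using vl[of k] cV by (smt (verit) mult_nonneg_nonneg)
qed

lemma qnu: "q * \<nu> > 0" using q \<nu> by simp

lemma bias_up:
  assumes "c > 0" "h > 0" "c * h \<le> real k"
  shows "b k \<le> Cb * c powr (-(q*\<nu>)) * h powr (-(q*\<nu>))"
proof -
  have "real (Suc k) powr (-(q*\<nu>)) \<le> (c*h) powr (-(q*\<nu>))"
    using assms qnu by (intro powr_neg_mono) auto
  also have "\<dots> = c powr (-(q*\<nu>)) * h powr (-(q*\<nu>))" using assms by (simp add: powr_mult)
  finally show ?thesis using bu[of k] Cb by (smt (verit) mult.assoc mult_left_mono)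
qed

section \<open>case q - p > -1\<close>

context
  assumes r: "q - p > -1"
begin

definition "D = (1+\<nu>)*q + 1 - p"

lemma D_eq: "D = q*\<nu> + (q - p + 1)" unfolding D_def by (simp add: algebra_simps)

lemma D_pos: "D > 0" unfolding D_eq using r qnu by linarith

lemma exp_eq: "(q-p+1)/D = -(q*\<nu>)/D + 1"
  using D_pos by (simp add: D_eq field_simps)

lemma npow_div: "n \<ge> 1 \<Longrightarrow> real n powr ((q-p+1)/D) / real n = real n powr (-(q*\<nu>)/D)"
  by (simp only: exp_eq powr_add) simp

lemma L3: "\<exists>c>0. \<forall>n\<ge>1. \<forall>k\<ge>1. c * real n powr (-(q*\<nu>)/D) \<le> b k + V k / real n"
proof -
  obtain cT CT where cT: "0 < cT" "0 < CT" and TT: "\<forall>k. cT * real k powr (q-p+1) \<le> (\<Sum>j<k. real (Suc j) powr (q-p))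
           \<and> (\<Sum>j<k. real (Suc j) powr (q-p)) \<le> CT * real k powr (q-p+1)"
    using sum_pow_bounds[OF r] by blast
  have T: "\<And>k. cT * real k powr (q-p+1) \<le> (\<Sum>j<k. real (Suc j) powr (q-p))" using TT by blast
  define c where "c = min (cb * 2 powr (-(q*\<nu>))) (cV*cT)"
  have c: "c > 0" using cb cV cT by (simp add: c_def)
  { fix n k :: nat assume n: "n \<ge> 1" and k: "k \<ge> 1"
    define t where "t = real n powr (1/D)"
    have t: "t > 0" using n by (simp add: t_def)
    have "c * real n powr (-(q*\<nu>)/D) \<le> b k + V k / real n"
    proof (cases "real k \<ge> t")
      case True
      have "t powr (q-p+1) \<le> real k powr (q-p+1)" using True t r by (intro powr_mono2) auto
      have "cV * cT * t powr (q-p+1) \<le> V k"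
      proof -
        have "cV * cT * t powr (q-p+1) \<le> cV * (cT * real k powr (q-p+1))"
          using \<open>t powr (q-p+1) \<le> real k powr (q-p+1)\<close> cV cT by (simp add: mult.assoc)
        also have "\<dots> \<le> cV * (\<Sum>j<k. real (Suc j) powr (q-p))" using T[of k] cV by simp
        also have "\<dots> \<le> V k" by (rule vl)
        finally show ?thesis .
      qed
      moreover have "t powr (q-p+1) / real n = real n powr (-(q*\<nu>)/D)"
      proof -
        have "t powr (q-p+1) = real n powr ((q-p+1)/D)" using n unfolding t_def by (simp add: powr_powr)
        then show ?thesis using npow_div[OF n] by simp
      qed
      ultimately have "cV * cT * real n powr (-(q*\<nu>)/D) \<le> V k / real n"
        using n by (smt (verit) divide_right_mono of_nat_0_le_iff times_divide_eq_right)
      moreover have "c \<le> cV * cT" by (simp add: c_def)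
      ultimately have "c * real n powr (-(q*\<nu>)/D) \<le> V k / real n"
        by (smt (verit) mult_right_mono powr_ge_zero)
      then show ?thesis using b_nonneg[of k] by simp
    next
      case False
      have "real (Suc k) \<le> 2 * t" using False k by simp
      then have "(2*t) powr (-(q*\<nu>)) \<le> real (Suc k) powr (-(q*\<nu>))"
        using qnu by (intro powr_neg_mono) auto
      moreover have "(2*t) powr (-(q*\<nu>)) = 2 powr (-(q*\<nu>)) * real n powr (-(q*\<nu>)/D)"
        using n unfolding t_def by (simp add: powr_mult powr_powr)
      ultimately have "cb * (2 powr (-(q*\<nu>)) * real n powr (-(q*\<nu>)/D)) \<le> b k"
        using bl[of k] cb by (smt (verit) mult_left_mono)
      moreover have "c \<le> cb * 2 powr (-(q*\<nu>))" by (simp add: c_def)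
      ultimately have "c * real n powr (-(q*\<nu>)/D) \<le> b k"
        by (smt (verit) mult.assoc mult_right_mono powr_ge_zero)
      then show ?thesis using V_nonneg[of k] n by (smt (verit) divide_nonneg_nonneg of_nat_0_le_iff)
    qed }
  then show ?thesis using c by blast
qed

lemma U3:
  assumes cK: "cK > 0"
  shows "\<exists>C. \<forall>n\<ge>1. \<forall>k. cK * (\<rho> * real n) powr (1/D) \<le> real k \<and> real k \<le> CK * (\<rho> * real n) powr (1/D)
            \<longrightarrow> b k + V k / real n \<le> C * real n powr (-(q*\<nu>)/D)"
proof -
  obtain cT CT where cT: "0 < cT" "0 < CT" and TT: "\<forall>k. cT * real k powr (q-p+1) \<le> (\<Sum>j<k. real (Suc j) powr (q-p))
           \<and> (\<Sum>j<k. real (Suc j) powr (q-p)) \<le> CT * real k powr (q-p+1)"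
    using sum_pow_bounds[OF r] by blast
  have T: "\<And>k. (\<Sum>j<k. real (Suc j) powr (q-p)) \<le> CT * real k powr (q-p+1)" using TT by blast
  define C where "C = Cb * cK powr (-(q*\<nu>)) * \<rho> powr (-(q*\<nu>)/D) + CV * CT * CK powr (q-p+1) * \<rho> powr ((q-p+1)/D)"
  { fix n k :: nat assume n: "n \<ge> 1" and k: "cK * (\<rho> * real n) powr (1/D) \<le> real k" "real k \<le> CK * (\<rho> * real n) powr (1/D)"
    define h where "h = (\<rho> * real n) powr (1/D)"
    have h: "h > 0" using n \<rho> by (simp add: h_def)
    have "b k \<le> Cb * cK powr (-(q*\<nu>)) * h powr (-(q*\<nu>))"
      using bias_up[of cK h k] cK h k by (simp add: h_def)
    also have "h powr (-(q*\<nu>)) = \<rho> powr (-(q*\<nu>)/D) * real n powr (-(q*\<nu>)/D)"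
      using n \<rho> unfolding h_def by (simp add: powr_powr powr_mult)
    finally have B: "b k \<le> Cb * cK powr (-(q*\<nu>)) * \<rho> powr (-(q*\<nu>)/D) * real n powr (-(q*\<nu>)/D)"
      by (simp add: mult.assoc)
    have kk: "0 \<le> real k" by simp
    have "V k \<le> CV * (CT * real k powr (q-p+1))" using vu[of k] T[of k] CV by (smt (verit) mult_left_mono)
    also have "real k powr (q-p+1) \<le> (CK * h) powr (q-p+1)" using k r unfolding h_def by (intro powr_mono2) auto
    also have "(CK * h) powr (q-p+1) = CK powr (q-p+1) * \<rho> powr ((q-p+1)/D) * real n powr ((q-p+1)/D)"
    proof -
      have "CK \<ge> 0" using k h cK kk unfolding h_def
        by (smt (verit) mult_le_0_iff mult_pos_pos order_trans)
      then show ?thesis using n \<rho> h unfolding h_def by (simp add: powr_mult powr_powr)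
    qed
    finally have "V k \<le> CV * (CT * (CK powr (q-p+1) * \<rho> powr ((q-p+1)/D) * real n powr ((q-p+1)/D)))"
      using CV cT by (simp add: mult_left_mono)
    moreover have "real n powr ((q-p+1)/D) / real n = real n powr (-(q*\<nu>)/D)"
      by (rule npow_div[OF n])
    ultimately have "V k / real n \<le> CV * CT * CK powr (q-p+1) * \<rho> powr ((q-p+1)/D) * real n powr (-(q*\<nu>)/D)"
      using n by (smt (verit, ccfv_SIG) divide_right_mono mult.assoc of_nat_0_le_iff times_divide_eq_right)
    with B have "b k + V k / real n \<le> C * real n powr (-(q*\<nu>)/D)"
      unfolding C_def by (simp add: distrib_right) }
  then show ?thesis by blast
qed

end
end

context asy begin

lemma U_bias_h:
  assumes "cK > 0" "n \<ge> 1" "cK * (\<rho> * real n) powr (1/(\<nu>*q)) \<le> real k"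
  shows "b k \<le> Cb * cK powr (-(q*\<nu>)) / \<rho> / real n"
proof -
  define h where "h = (\<rho> * real n) powr (1/(\<nu>*q))"
  have h: "h > 0" using assms \<rho> by (simp add: h_def)
  have "b k \<le> Cb * cK powr (-(q*\<nu>)) * h powr (-(q*\<nu>))"
    using bias_up[of cK h k] assms h by (simp add: h_def)
  also have "h powr (-(q*\<nu>)) = (\<rho> * real n) powr (-1)"
    using assms \<rho> q \<nu> unfolding h_def by (simp add: powr_powr)
  also have "\<dots> = 1 / \<rho> / real n" using assms \<rho> by (simp add: powr_minus_divide)
  finally show ?thesis by simp
qed

section \<open>case q - p = -1\<close>

lemma L2:
  assumes r: "q - p = -1"
  shows "\<exists>c>0. eventually (\<lambda>n. \<forall>k\<ge>1. c * (ln (real n * \<rho>) / real n) \<le> b k + V k / real n) sequentially"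
proof -
  define a where "a = q*\<nu>"
  have a: "a > 0" using qnu by (simp add: a_def)
  define c where "c = min (cb/4) (cV/(4*a))"
  have c: "c > 0" using cb cV a by (simp add: c_def)
  have ev1: "eventually (\<lambda>n. ln (real n * \<rho>) \<le> 2 * ln (real n)) sequentially" using \<rho> by real_asymp
  have ev2: "eventually (\<lambda>n. 2 * c * ln (real n) / real n \<le> cb * real n powr (-1/2)) sequentially"
    using c cb by real_asymp
  have ev3: "eventually (\<lambda>n. (n::nat) \<ge> 1) sequentially" by (rule eventually_ge_at_top)
  have "eventually (\<lambda>n. \<forall>k\<ge>1. c * (ln (real n * \<rho>) / real n) \<le> b k + V k / real n) sequentially"
    using ev1 ev2 ev3
  proof eventually_elim
    case (elim n)
    have n0: "real n > 0" using elim by simp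
    have lnn: "ln (real n) \<ge> 0" using elim by simp
    have cg: "c * (ln (real n * \<rho>) / real n) \<le> 2 * c * ln (real n) / real n"
      using elim(1) c n0 by (simp add: divide_right_mono mult_left_mono)
    show ?case
    proof (intro allI impI)
      fix k :: nat assume k: "k \<ge> 1"
      show "c * (ln (real n * \<rho>) / real n) \<le> b k + V k / real n"
      proof (cases "real (Suc k) powr a \<ge> real n powr (1/2)")
        case True
        then have "ln (real n powr (1/2)) \<le> ln (real (Suc k) powr a)" using n0 by (subst ln_le_cancel_iff) auto
        moreover have "ln (real n powr (1/2)) = ln (real n) / 2" using n0 by (simp add: ln_powr)
        moreover have "ln (real (Suc k) powr a) = a * ln (real (Suc k))" by (simp add: ln_powr)
        ultimately have l: "ln (real n) / 2 \<le> a * ln (real (Suc k))" by simp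
        have "cV * ln (real k + 1) \<le> cV * (\<Sum>j<k. real (Suc j) powr (q-p))"
          using harm_lower[of k] r cV by (intro mult_left_mono) auto
        then have "cV * ln (real k + 1) \<le> V k" using vl[of k] by linarith
        moreover have "ln (real n) / (2*a) \<le> ln (real k + 1)"
        proof -
          have "ln (real n) / (2*a) = (ln (real n) / 2) / a" by simp
          also have "\<dots> \<le> (a * ln (real (Suc k))) / a" using l a by (intro divide_right_mono) auto
          finally show ?thesis using a by (simp add: add.commute)
        qed
        ultimately have "cV * (ln (real n) / (2*a)) \<le> V k"
          using cV by (smt (verit) mult_left_mono)
        moreover have "2 * c * ln (real n) \<le> cV * (ln (real n) / (2*a))"
        proof -
          have "2*c \<le> cV / (2*a)" using c_def by simp
          then have "2*c*ln (real n) \<le> cV / (2*a) * ln (real n)" using lnn by (rule mult_right_mono)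
          then show ?thesis by simp
        qed
        ultimately have "2 * c * ln (real n) / real n \<le> V k / real n" using n0 by (simp add: divide_right_mono)
        then show ?thesis using cg b_nonneg[of k] by linarith
      next
        case False
        have "real n powr (-1/2) \<le> real (Suc k) powr (-a)"
        proof -
          have "real n powr (-1/2) = 1 / real n powr (1/2)" by (simp add: powr_minus_divide)
          also have "\<dots> \<le> 1 / real (Suc k) powr a" using False n0 by (intro divide_left_mono) auto
          also have "\<dots> = real (Suc k) powr (-a)" by (simp add: powr_minus_divide)
          finally show ?thesis .
        qed
        then have "cb * real n powr (-1/2) \<le> b k" using bl[of k] cb unfolding a_def
          by (smt (verit) mult_left_mono)
        moreover have "V k / real n \<ge> 0" using V_nonneg[of k] n0 by simp
        ultimately show ?thesis using cg elim(2) by linarith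
      qed
    qed
  qed
  then show ?thesis using c by blast
qed

lemma U2:
  assumes r: "q - p = -1" and cK: "cK > 0" and CK: "CK > 0"
  shows "\<exists>C. eventually (\<lambda>n. \<forall>k. cK * (\<rho> * real n) powr (1/(\<nu>*q)) \<le> real k \<and> real k \<le> CK * (\<rho> * real n) powr (1/(\<nu>*q))
            \<longrightarrow> b k + V k / real n \<le> C * (ln (real n * \<rho>) / real n)) sequentially"
proof -
  define C where "C = CV * (1 + \<bar>ln CK\<bar>) + CV / (\<nu>*q) + Cb * cK powr (-(q*\<nu>)) / \<rho>"
  have e: "1/(\<nu>*q) > 0" using qnu by (simp add: mult.commute)
  have ev1: "eventually (\<lambda>n. 1 \<le> cK * (\<rho> * real n) powr (1/(\<nu>*q))) sequentially"
    using cK \<rho> e by real_asymp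
  have ev2: "eventually (\<lambda>n. 1 \<le> ln (real n * \<rho>)) sequentially" using \<rho> by real_asymp
  have ev3: "eventually (\<lambda>n. (n::nat) \<ge> 1) sequentially" by (rule eventually_ge_at_top)
  have "eventually (\<lambda>n. \<forall>k. cK * (\<rho> * real n) powr (1/(\<nu>*q)) \<le> real k \<and> real k \<le> CK * (\<rho> * real n) powr (1/(\<nu>*q))
            \<longrightarrow> b k + V k / real n \<le> C * (ln (real n * \<rho>) / real n)) sequentially"
    using ev1 ev2 ev3
  proof eventually_elim
    case (elim n)
    have n0: "real n > 0" using elim by simp
    define L where "L = ln (real n * \<rho>)"
    show ?case
    proof (intro allI impI)
      fix k assume k: "cK * (\<rho> * real n) powr (1/(\<nu>*q)) \<le> real k \<and> real k \<le> CK * (\<rho> * real n) powr (1/(\<nu>*q))"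
      have k1: "k \<ge> 1" using k elim(1) by simp
      have B: "b k \<le> Cb * cK powr (-(q*\<nu>)) / \<rho> / real n"
        using U_bias_h[OF cK elim(3)] k by blast
      have "ln (real k) \<le> ln (CK * (\<rho> * real n) powr (1/(\<nu>*q)))"
        using k k1 by simp
      also have "\<dots> = ln CK + L / (\<nu>*q)" using CK \<rho> n0 unfolding L_def by (simp add: ln_mult ln_powr mult.commute)
      finally have lk: "ln (real k) \<le> ln CK + L / (\<nu>*q)" .
      have "CV * (\<Sum>j<k. real (Suc j) powr (q-p)) \<le> CV * (1 + ln (real k))"
        using harm_upper[OF k1] r CV by (intro mult_left_mono) auto
      then have "V k \<le> CV * (1 + ln (real k))" using vu[of k] by linarith
      also have "\<dots> \<le> CV * (1 + \<bar>ln CK\<bar> + L / (\<nu>*q))" using lk CV by (intro mult_left_mono) auto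
      finally have Vb: "V k \<le> CV * (1 + \<bar>ln CK\<bar>) + CV / (\<nu>*q) * L" by (simp add: algebra_simps)
      have L1: "L \<ge> 1" using elim(2) unfolding L_def .
      have "b k * real n + V k \<le> Cb * cK powr (-(q*\<nu>)) / \<rho> + CV * (1 + \<bar>ln CK\<bar>) + CV / (\<nu>*q) * L"
      proof -
        have "b k * real n \<le> Cb * cK powr (-(q*\<nu>)) / \<rho>" using B n0 by (metis pos_le_divide_eq)
        then show ?thesis using Vb by linarith
      qed
      also have "\<dots> \<le> C * L"
      proof -
        have X0: "0 \<le> Cb * cK powr (-(q*\<nu>)) / \<rho>" using Cb \<rho> by simp
        have p1: "Cb * cK powr (-(q*\<nu>)) / \<rho> \<le> Cb * cK powr (-(q*\<nu>)) / \<rho> * L"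
          using mult_left_mono[OF L1 X0] by simp
        have Y0: "0 \<le> CV * (1 + \<bar>ln CK\<bar>)" using CV by simp
        have p2: "CV * (1 + \<bar>ln CK\<bar>) \<le> CV * (1 + \<bar>ln CK\<bar>) * L"
          using mult_left_mono[OF L1 Y0] by simp
        show ?thesis using p1 p2 unfolding C_def by (simp add: algebra_simps)
      qed
      finally have F: "b k * real n + V k \<le> C * L" .
      then have "(b k * real n + V k) / real n \<le> C * L / real n" using n0 by (simp add: divide_right_mono)
      moreover have "b k + V k / real n = (b k * real n + V k) / real n" using n0 by (simp add: field_simps)
      ultimately show "b k + V k / real n \<le> C * (ln (real n * \<rho>) / real n)"
        unfolding L_def by simp
    qed
  qed
  then show ?thesis by blast
qed

section \<open>case q - p < -1\<close>

lemma L1: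
  assumes r: "q - p < -1"
  shows "\<forall>n\<ge>1. \<forall>k\<ge>1. cV * (1 / real n) \<le> b k + V k / real n"
proof (intro allI impI)
  fix n k :: nat assume n: "n \<ge> 1" and k: "k \<ge> 1"
  have "real (Suc 0) powr (q-p) \<le> (\<Sum>j<k. real (Suc j) powr (q-p))"
    using k by (intro member_le_sum[of 0 "{..<k}" "\<lambda>j. real (Suc j) powr (q-p)"]) auto
  then have "1 \<le> (\<Sum>j<k. real (Suc j) powr (q-p))" by simp
  then have "cV * 1 \<le> cV * (\<Sum>j<k. real (Suc j) powr (q-p))" using cV by (intro mult_left_mono) auto
  then have "cV \<le> V k" using vl[of k] by simp
  then have "cV / real n \<le> V k / real n" using n by (simp add: divide_right_mono)
  then show "cV * (1 / real n) \<le> b k + V k / real n" using b_nonneg[of k] by simp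
qed

lemma U1:
  assumes r: "q - p < -1" and cK: "cK > 0"
  shows "\<exists>C. \<forall>n\<ge>1. \<forall>k. cK * (\<rho> * real n) powr (1/(\<nu>*q)) \<le> real k
            \<longrightarrow> b k + V k / real n \<le> C * (1 / real n)"
proof -
  obtain S where S: "\<And>k. (\<Sum>j<k. real (Suc j) powr (q-p)) \<le> S" using sum_pow_summ[OF r] by blast
  define C where "C = Cb * cK powr (-(q*\<nu>)) / \<rho> + CV * S"
  { fix n k :: nat assume n: "n \<ge> 1" and k: "cK * (\<rho> * real n) powr (1/(\<nu>*q)) \<le> real k"
    have B: "b k \<le> Cb * cK powr (-(q*\<nu>)) / \<rho> / real n" using U_bias_h[OF cK n k] .
    have "V k \<le> CV * S" using vu[of k] S[of k] CV by (smt (verit) mult_left_mono)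
    then have "V k / real n \<le> CV * S / real n" using n by (simp add: divide_right_mono)
    with B have "b k + V k / real n \<le> C * (1 / real n)" unfolding C_def by (simp add: add_divide_distrib) }
  then show ?thesis by blast
qed

end

lemma on_inner: "orthonormal_seq v \<Longrightarrow> inner (v i) (v j) = (if i = j then 1 else 0)"
  unfolding orthonormal_seq_def by simp

lemma on_inner_sum:
  assumes "orthonormal_seq v" "finite J"
  shows "inner (\<Sum>j\<in>J. c j *\<^sub>R v j) (v i) = (if i \<in> J then c i else 0)"
proof -
  have "inner (\<Sum>j\<in>J. c j *\<^sub>R v j) (v i) = (\<Sum>j\<in>J. c j * (if j = i then 1 else 0))"
    using assms(1) unfolding orthonormal_seq_def by (simp add: inner_sum_left)
  also have "\<dots> = (if i \<in> J then c i else 0)" using assms(2) by (simp add: if_distrib sum.delta' cong: if_cong)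
  finally show ?thesis .
qed

lemma on_inner_sum2:
  assumes "orthonormal_seq v" "finite J"
  shows "inner x (\<Sum>j\<in>J. c j *\<^sub>R v j) = (\<Sum>j\<in>J. c j * inner x (v j))"
  by (simp add: inner_sum_right)

lemma on_norm_sum:
  assumes "orthonormal_seq v" "finite J"
  shows "(norm (\<Sum>j\<in>J. c j *\<^sub>R v j))\<^sup>2 = (\<Sum>j\<in>J. (c j)\<^sup>2)"
proof -
  have "(norm (\<Sum>j\<in>J. c j *\<^sub>R v j))\<^sup>2 = inner (\<Sum>j\<in>J. c j *\<^sub>R v j) (\<Sum>j\<in>J. c j *\<^sub>R v j)"
    by (simp add: power2_norm_eq_inner)
  also have "\<dots> = (\<Sum>i\<in>J. c i * inner (\<Sum>j\<in>J. c j *\<^sub>R v j) (v i))"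
    by (simp add: inner_sum_right)
  also have "\<dots> = (\<Sum>i\<in>J. (c i)\<^sup>2)" using on_inner_sum[OF assms] by (simp add: power2_eq_square)
  finally show ?thesis .
qed

lemma bessel:
  assumes "orthonormal_seq v" "finite J"
  shows "(\<Sum>j\<in>J. (inner \<xi> (v j))\<^sup>2) \<le> (norm \<xi>)\<^sup>2"
proof -
  define P where "P = (\<Sum>j\<in>J. inner \<xi> (v j) *\<^sub>R v j)"
  have "0 \<le> (norm (\<xi> - P))\<^sup>2" by simp
  also have "\<dots> = (norm \<xi>)\<^sup>2 - 2 * inner \<xi> P + (norm P)\<^sup>2"
    by (simp add: power2_norm_eq_inner inner_diff_left inner_diff_right inner_commute)
  also have "inner \<xi> P = (\<Sum>j\<in>J. (inner \<xi> (v j))\<^sup>2)"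
    unfolding P_def using on_inner_sum2[OF assms] by (simp add: power2_eq_square)
  also have "(norm P)\<^sup>2 = (\<Sum>j\<in>J. (inner \<xi> (v j))\<^sup>2)"
    unfolding P_def by (rule on_norm_sum[OF assms])
  finally show ?thesis by simp
qed

lemma on_shift: "orthonormal_seq v \<Longrightarrow> orthonormal_seq (\<lambda>i. v (i + k))"
  unfolding orthonormal_seq_def by auto

lemma on_norm1: "orthonormal_seq v \<Longrightarrow> norm (v k) = 1"
  unfolding orthonormal_seq_def by (metis norm_eq_sqrt_inner real_sqrt_one)

definition Pk :: "('x::real_vector \<Rightarrow> 'y::real_inner) \<Rightarrow> (nat \<Rightarrow> real) \<Rightarrow> (nat \<Rightarrow> 'y) \<Rightarrow> (nat \<Rightarrow> 'x) \<Rightarrow> 'x \<Rightarrow> nat \<Rightarrow> 'x" where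
  "Pk K \<sigma> u v xh k = (\<Sum>j<k. (inverse (\<sigma> j) * inner (K xh) (u j)) *\<^sub>R v j)"

lemma source_bias_le:
  fixes K :: "'x::real_inner \<Rightarrow> 'y::real_inner"
  assumes lin: "bounded_linear K" and ou: "orthonormal_seq u" and ov: "orthonormal_seq v"
    and \<sigma>_pos: "\<And>j. \<sigma> j > 0" and \<sigma>_mono: "decseq \<sigma>" and svd: "\<And>j. K (v j) = \<sigma> j *\<^sub>R u j"
    and xh: "xh \<in> source_set \<sigma> v \<nu> \<rho>" and \<nu>: "\<nu> \<ge> 0"
  shows "(norm (Pk K \<sigma> u v xh k - xh))\<^sup>2 \<le> \<rho>\<^sup>2 * (\<sigma> k powr \<nu>)\<^sup>2"
proof -
  obtain \<xi> where \<xi>: "norm \<xi> \<le> \<rho>" and sm: "(\<lambda>j. (\<sigma> j powr \<nu> * inner \<xi> (v j)) *\<^sub>R v j) sums xh"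
    using xh unfolding source_set_def by blast
  define c where "c j = \<sigma> j powr \<nu> * inner \<xi> (v j)" for j
  have sm': "(\<lambda>j. c j *\<^sub>R v j) sums xh" using sm by (simp add: c_def)
  have Kc: "inner (K xh) (u j) = \<sigma> j * c j" for j
  proof -
    have "(\<lambda>i. K (c i *\<^sub>R v i)) sums K xh" using bounded_linear.sums[OF lin sm'] .
    then have "(\<lambda>i. inner (K (c i *\<^sub>R v i)) (u j)) sums inner (K xh) (u j)"
      by (rule bounded_linear.sums[OF bounded_linear_inner_left])
    moreover have "(\<lambda>i. inner (K (c i *\<^sub>R v i)) (u j)) = (\<lambda>i. if i = j then \<sigma> j * c j else 0)"
    proof
      fix i
      have uu: "inner (u i) (u j) = (if i = j then 1 else 0)" by (rule on_inner[OF ou])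
      have "K (c i *\<^sub>R v i) = c i *\<^sub>R (\<sigma> i *\<^sub>R u i)"
        by (simp only: linear_simps(5)[OF lin] svd)
      then have eq: "inner (K (c i *\<^sub>R v i)) (u j) = c i * \<sigma> i * inner (u i) (u j)"
        by (simp only: inner_scaleR_left mult.assoc)
      show "inner (K (c i *\<^sub>R v i)) (u j) = (if i = j then \<sigma> j * c j else 0)"
      proof (cases "i = j")
        case True
        then have "inner (u i) (u j) = 1" using uu by simp
        then show ?thesis using eq True by simp
      next
        case False
        then have "inner (u i) (u j) = 0" using uu by simp
        then show ?thesis using eq False by simp
      qed
    qed
    ultimately have A: "(\<lambda>i. if i = j then \<sigma> j * c j else 0) sums inner (K xh) (u j)" by simp
    have B: "(\<lambda>i. if i = j then \<sigma> j * c j else 0) sums (\<sigma> j * c j)"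
      using sums_single[of j "\<lambda>_. \<sigma> j * c j"] by simp
    show ?thesis using sums_unique2[OF A B] .
  qed
  have P: "Pk K \<sigma> u v xh k = (\<Sum>j<k. c j *\<^sub>R v j)"
  proof -
    have e: "\<And>j. inverse (\<sigma> j) * (\<sigma> j * c j) = c j" using \<sigma>_pos by (simp add: less_imp_neq[symmetric])
    show ?thesis unfolding Pk_def Kc e ..
  qed
  define w where "w i = c (i + k) *\<^sub>R v (i + k)" for i
  have tail: "w sums (xh - (\<Sum>j<k. c j *\<^sub>R v j))"
  proof -
    have "(\<lambda>j. c j *\<^sub>R v j) sums ((xh - (\<Sum>j<k. c j *\<^sub>R v j)) + (\<Sum>j<k. c j *\<^sub>R v j))"
      using sm' by simp
    from sums_iff_shift[THEN iffD2, OF this] show ?thesis unfolding w_def by simp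
  qed
  have ov': "orthonormal_seq (\<lambda>i. v (i + k))" by (rule on_shift[OF ov])
  have bnd: "(norm (\<Sum>i<N. w i))\<^sup>2 \<le> \<rho>\<^sup>2 * (\<sigma> k powr \<nu>)\<^sup>2" for N
  proof -
    have "(norm (\<Sum>i<N. w i))\<^sup>2 = (\<Sum>i<N. (c (i+k))\<^sup>2)"
      unfolding w_def by (rule on_norm_sum[OF ov']) simp
    also have "\<dots> \<le> (\<Sum>i<N. (\<sigma> k powr \<nu>)\<^sup>2 * (inner \<xi> (v (i+k)))\<^sup>2)"
    proof (intro sum_mono)
      fix i
      have "\<sigma> (i+k) \<le> \<sigma> k" using \<sigma>_mono by (simp add: decseqD)
      then have "\<sigma> (i+k) powr \<nu> \<le> \<sigma> k powr \<nu>" using less_imp_le[OF \<sigma>_pos[of "i+k"]] \<nu> by (intro powr_mono2) auto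
      then have "(\<sigma> (i+k) powr \<nu>)\<^sup>2 \<le> (\<sigma> k powr \<nu>)\<^sup>2" by (intro power_mono) auto
      then show "(c (i+k))\<^sup>2 \<le> (\<sigma> k powr \<nu>)\<^sup>2 * (inner \<xi> (v (i+k)))\<^sup>2"
        unfolding c_def power_mult_distrib by (intro mult_right_mono) auto
    qed
    also have "\<dots> = (\<sigma> k powr \<nu>)\<^sup>2 * (\<Sum>i<N. (inner \<xi> (v (i+k)))\<^sup>2)" by (simp add: sum_distrib_left)
    also have "\<dots> \<le> (\<sigma> k powr \<nu>)\<^sup>2 * (norm \<xi>)\<^sup>2"
      using bessel[OF ov', of "{..<N}" \<xi>] by (intro mult_left_mono) auto
    also have "\<dots> \<le> (\<sigma> k powr \<nu>)\<^sup>2 * \<rho>\<^sup>2"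
      using \<xi> by (intro mult_left_mono power_mono) auto
    finally show ?thesis by (simp add: mult.commute)
  qed
  have "(\<lambda>N. (norm (\<Sum>i<N. w i))\<^sup>2) \<longlonglongrightarrow> (norm (xh - (\<Sum>j<k. c j *\<^sub>R v j)))\<^sup>2"
    using tail unfolding sums_def by (intro tendsto_intros)
  then have "(norm (xh - (\<Sum>j<k. c j *\<^sub>R v j)))\<^sup>2 \<le> \<rho>\<^sup>2 * (\<sigma> k powr \<nu>)\<^sup>2"
    using bnd by (intro LIMSEQ_le_const2) auto
  then show ?thesis unfolding P by (simp add: norm_minus_commute)
qed

lemma source_bias_attained:
  fixes K :: "'x::real_inner \<Rightarrow> 'y::real_inner"
  assumes lin: "bounded_linear K" and ou: "orthonormal_seq u" and ov: "orthonormal_seq v"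
    and \<sigma>_pos: "\<And>j. \<sigma> j > 0" and svd: "\<And>j. K (v j) = \<sigma> j *\<^sub>R u j" and \<rho>: "\<rho> > 0"
  shows "(\<rho> * \<sigma> k powr \<nu>) *\<^sub>R v k \<in> source_set \<sigma> v \<nu> \<rho>"
    and "(norm (Pk K \<sigma> u v ((\<rho> * \<sigma> k powr \<nu>) *\<^sub>R v k) k - (\<rho> * \<sigma> k powr \<nu>) *\<^sub>R v k))\<^sup>2 = \<rho>\<^sup>2 * (\<sigma> k powr \<nu>)\<^sup>2"
proof -
  have "(\<lambda>j. (\<sigma> j powr \<nu> * inner (\<rho> *\<^sub>R v k) (v j)) *\<^sub>R v j) = (\<lambda>j. if j = k then (\<rho> * \<sigma> k powr \<nu>) *\<^sub>R v k else 0)"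
  proof
    fix j
    have vv: "inner (v k) (v j) = (if k = j then 1 else 0)" by (rule on_inner[OF ov])
    show "(\<sigma> j powr \<nu> * inner (\<rho> *\<^sub>R v k) (v j)) *\<^sub>R v j = (if j = k then (\<rho> * \<sigma> k powr \<nu>) *\<^sub>R v k else 0)"
    proof (cases "j = k")
      case True
      then have "inner (v k) (v j) = 1" using vv by simp
      then show ?thesis using True by (simp add: algebra_simps)
    next
      case False
      then have "inner (v k) (v j) = 0" using vv by simp
      then show ?thesis using False by simp
    qed
  qed
  then have "(\<lambda>j. (\<sigma> j powr \<nu> * inner (\<rho> *\<^sub>R v k) (v j)) *\<^sub>R v j) sums ((\<rho> * \<sigma> k powr \<nu>) *\<^sub>R v k)"
    using sums_single[of k "\<lambda>_. (\<rho> * \<sigma> k powr \<nu>) *\<^sub>R v k"] by simp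
  moreover have "norm (\<rho> *\<^sub>R v k) \<le> \<rho>" using on_norm1[OF ov] \<rho> by simp
  ultimately show "(\<rho> * \<sigma> k powr \<nu>) *\<^sub>R v k \<in> source_set \<sigma> v \<nu> \<rho>"
    unfolding source_set_def by blast
  have "Pk K \<sigma> u v ((\<rho> * \<sigma> k powr \<nu>) *\<^sub>R v k) k = 0"
    unfolding Pk_def using ou unfolding orthonormal_seq_def
  proof (intro sum.neutral ballI)
    fix j assume j: "j \<in> {..<k}"
    have uu: "inner (u k) (u j) = 0" using on_inner[OF ou, of k j] j by simp
    have "K ((\<rho> * \<sigma> k powr \<nu>) *\<^sub>R v k) = (\<rho> * \<sigma> k powr \<nu>) *\<^sub>R (\<sigma> k *\<^sub>R u k)"
        by (simp only: linear_simps(5)[OF lin] svd)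
    then have "inner (K ((\<rho> * \<sigma> k powr \<nu>) *\<^sub>R v k)) (u j) = (\<rho> * \<sigma> k powr \<nu>) * \<sigma> k * inner (u k) (u j)"
        by (simp only: inner_scaleR_left mult.assoc)
    then show "(inverse (\<sigma> j) * inner (K ((\<rho> * \<sigma> k powr \<nu>) *\<^sub>R v k)) (u j)) *\<^sub>R v j = 0"
      using uu by simp
  qed
  moreover have "norm ((\<rho> * \<sigma> k powr \<nu>) *\<^sub>R v k) = \<rho> * \<sigma> k powr \<nu>"
    using on_norm1[OF ov, of k] \<rho> by simp
  ultimately show "(norm (Pk K \<sigma> u v ((\<rho> * \<sigma> k powr \<nu>) *\<^sub>R v k) k - (\<rho> * \<sigma> k powr \<nu>) *\<^sub>R v k))\<^sup>2 = \<rho>\<^sup>2 * (\<sigma> k powr \<nu>)\<^sup>2"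
    by (simp only: diff_0 norm_minus_cancel power_mult_distrib)
qed

locale noise = prob_space M for M :: "'w measure" +
  fixes E :: "nat \<Rightarrow> 'w \<Rightarrow> 'y::{real_inner,banach,second_countable_topology}" and u :: "nat \<Rightarrow> 'y"
  assumes meas[measurable]: "\<And>i. E i \<in> borel_measurable M"
    and indep: "indep_vars (\<lambda>_. borel) E UNIV"
    and ident: "\<And>i. distr M borel (E i) = distr M borel (E 0)"
    and integ: "integrable M (E 0)"
    and mean0: "(\<integral>\<omega>. E 0 \<omega> \<partial>M) = 0"
    and mom2: "integrable M (\<lambda>\<omega>. (norm (E 0 \<omega>))\<^sup>2)"
    and ou: "orthonormal_seq u"
begin

definition X where "X i j \<omega> = inner (E i \<omega>) (u j)"

lemma X_meas[measurable]: "X i j \<in> borel_measurable M"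
  unfolding X_def[abs_def] by measurable

lemma integral_transfer:
  fixes g :: "'y \<Rightarrow> real"
  assumes [measurable]: "g \<in> borel_measurable borel"
  shows "(\<integral>\<omega>. g (E i \<omega>) \<partial>M) = (\<integral>\<omega>. g (E 0 \<omega>) \<partial>M)"
proof -
  have "(\<integral>\<omega>. g (E i \<omega>) \<partial>M) = integral\<^sup>L (distr M borel (E i)) g"
    by (rule integral_distr[symmetric]) measurable
  also have "\<dots> = integral\<^sup>L (distr M borel (E 0)) g" by (simp only: ident[of i])
  also have "\<dots> = (\<integral>\<omega>. g (E 0 \<omega>) \<partial>M)" by (rule integral_distr) measurable
  finally show ?thesis .
qed

lemma integrable_transfer:
  fixes g :: "'y \<Rightarrow> real"
  assumes [measurable]: "g \<in> borel_measurable borel"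
  shows "integrable M (\<lambda>\<omega>. g (E i \<omega>)) \<longleftrightarrow> integrable M (\<lambda>\<omega>. g (E 0 \<omega>))"
proof -
  have "integrable M (\<lambda>\<omega>. g (E i \<omega>)) \<longleftrightarrow> integrable (distr M borel (E i)) g"
    by (rule integrable_distr_eq[symmetric]) measurable
  also have "\<dots> \<longleftrightarrow> integrable (distr M borel (E 0)) g" by (simp only: ident[of i])
  also have "\<dots> \<longleftrightarrow> integrable M (\<lambda>\<omega>. g (E 0 \<omega>))" by (rule integrable_distr_eq) measurable
  finally show ?thesis .
qed

lemma X_int: "integrable M (X i j)"
proof -
  have "integrable M (\<lambda>\<omega>. inner (E 0 \<omega>) (u j))" using integ by auto
  then show ?thesis unfolding X_def[abs_def] using integrable_transfer[of "\<lambda>y. inner y (u j)" i] by simp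
qed

lemma X_mean: "(\<integral>\<omega>. X i j \<omega> \<partial>M) = 0"
proof -
  have "(\<integral>\<omega>. X i j \<omega> \<partial>M) = (\<integral>\<omega>. inner (E 0 \<omega>) (u j) \<partial>M)"
    unfolding X_def using integral_transfer[of "\<lambda>y. inner y (u j)" i] by simp
  also have "\<dots> = inner (\<integral>\<omega>. E 0 \<omega> \<partial>M) (u j)" using integ by simp
  finally show ?thesis using mean0 by simp
qed

lemma X0_sq_int: "integrable M (\<lambda>\<omega>. (X 0 j \<omega>)\<^sup>2)"
proof (rule Bochner_Integration.integrable_bound[OF mom2])
  show "(\<lambda>\<omega>. (X 0 j \<omega>)\<^sup>2) \<in> borel_measurable M" by measurable
  show "AE \<omega> in M. norm ((X 0 j \<omega>)\<^sup>2) \<le> norm ((norm (E 0 \<omega>))\<^sup>2)"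
  proof (intro AE_I2)
    fix \<omega>
    have n1: "norm (u j) = 1" using on_norm1[OF ou] .
    have "\<bar>X 0 j \<omega>\<bar> \<le> norm (E 0 \<omega>)" unfolding X_def using Cauchy_Schwarz_ineq2[of "E 0 \<omega>" "u j"] n1 by simp
    then have "\<bar>X 0 j \<omega>\<bar>\<^sup>2 \<le> (norm (E 0 \<omega>))\<^sup>2"
      by (rule power_mono) simp
    then have "(X 0 j \<omega>)\<^sup>2 \<le> (norm (E 0 \<omega>))\<^sup>2" by simp
    then show "norm ((X 0 j \<omega>)\<^sup>2) \<le> norm ((norm (E 0 \<omega>))\<^sup>2)" by simp
  qed
qed

lemma X_sq_int: "integrable M (\<lambda>\<omega>. (X i j \<omega>)\<^sup>2)"
  using X0_sq_int[of j] integrable_transfer[of "\<lambda>y. (inner y (u j))\<^sup>2" i] unfolding X_def by simp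

lemma X_sq: "(\<integral>\<omega>. (X i j \<omega>)\<^sup>2 \<partial>M) = (\<integral>\<omega>. (inner (E 0 \<omega>) (u j))\<^sup>2 \<partial>M)"
  unfolding X_def using integral_transfer[of "\<lambda>y. (inner y (u j))\<^sup>2" i] by simp

lemma X_indep: "i \<noteq> i' \<Longrightarrow> indep_var borel (X i j) borel (X i' j)"
proof -
  assume ne: "i \<noteq> i'"
  have "indep_vars (\<lambda>_. borel) (\<lambda>i \<omega>. inner (E i \<omega>) (u j)) UNIV"
    by (rule indep_vars_compose2[OF indep]) measurable
  then have I: "indep_vars (\<lambda>_. borel) (\<lambda>i. X i j) UNIV" unfolding X_def[abs_def] .
  have "indep_vars (\<lambda>_. borel) (\<lambda>i. X i j) (insert i {i'})"
    by (rule indep_vars_subset[OF I]) auto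
  from indep_vars_sum[OF _ _ this] ne have "indep_var borel (X i j) borel (\<lambda>\<omega>. \<Sum>l\<in>{i'}. X l j \<omega>)" by simp
  then show ?thesis by simp
qed

lemma X_prod: "integrable M (\<lambda>\<omega>. X i j \<omega> * X i' j \<omega>) \<and>
  (\<integral>\<omega>. X i j \<omega> * X i' j \<omega> \<partial>M) = (if i = i' then (\<integral>\<omega>. (inner (E 0 \<omega>) (u j))\<^sup>2 \<partial>M) else 0)"
proof (cases "i = i'")
  case True
  then show ?thesis using X_sq_int[of i j] X_sq[of i j] by (simp add: power2_eq_square)
next
  case False
  have "integrable M (\<lambda>\<omega>. X i j \<omega> * X i' j \<omega>)"
    by (rule indep_var_integrable[OF X_indep[OF False] X_int X_int])
  moreover have "(\<integral>\<omega>. X i j \<omega> * X i' j \<omega> \<partial>M) = 0"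
    using indep_var_lebesgue_integral[OF X_indep[OF False] X_int X_int] X_mean by simp
  ultimately show ?thesis using False by simp
qed

definition S where "S n j \<omega> = (\<Sum>i<n. X i j \<omega>) / real n"

lemma S_int: "integrable M (S n j)"
  unfolding S_def[abs_def] using X_int by (intro integrable_divide integrable_sum) auto

lemma S_mean: "(\<integral>\<omega>. S n j \<omega> \<partial>M) = 0"
  unfolding S_def using X_int X_mean by (simp add: integral_sum)

lemma S_sq_eq: "(S n j \<omega>)\<^sup>2 = (\<Sum>i<n. \<Sum>i'<n. X i j \<omega> * X i' j \<omega>) / (real n)\<^sup>2"
  unfolding S_def by (simp add: power_divide power2_eq_square sum_product)

lemma S_sq_int: "integrable M (\<lambda>\<omega>. (S n j \<omega>)\<^sup>2)"
  unfolding S_sq_eq using X_prod by (intro integrable_divide integrable_sum) auto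

lemma S_sq: "n \<ge> 1 \<Longrightarrow> (\<integral>\<omega>. (S n j \<omega>)\<^sup>2 \<partial>M) = (\<integral>\<omega>. (inner (E 0 \<omega>) (u j))\<^sup>2 \<partial>M) / real n"
proof -
  assume n: "n \<ge> 1"
  let ?a = "\<integral>\<omega>. (inner (E 0 \<omega>) (u j))\<^sup>2 \<partial>M"
  have "(\<integral>\<omega>. (S n j \<omega>)\<^sup>2 \<partial>M) = (\<Sum>i<n. \<Sum>i'<n. (\<integral>\<omega>. X i j \<omega> * X i' j \<omega> \<partial>M)) / (real n)\<^sup>2"
    unfolding S_sq_eq using X_prod by (simp add: integral_sum)
  also have "\<dots> = (\<Sum>i<n. ?a) / (real n)\<^sup>2"
  proof -
    have "(\<Sum>i'<n. (\<integral>\<omega>. X i j \<omega> * X i' j \<omega> \<partial>M)) = ?a" if "i < n" for i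
    proof -
      have "(\<Sum>i'<n. (\<integral>\<omega>. X i j \<omega> * X i' j \<omega> \<partial>M)) = (\<Sum>i'<n. if i = i' then ?a else 0)"
        using X_prod by (intro sum.cong) auto
      also have "\<dots> = ?a" using that by (simp add: sum.delta)
      finally show ?thesis .
    qed
    then show ?thesis by simp
  qed
  also have "\<dots> = ?a / real n" using n by (simp add: power2_eq_square)
  finally show ?thesis .
qed


lemma Ybar_inner:
  assumes n: "n \<ge> 1"
  shows "inner (Ybar K E xh n \<omega>) (u j) = inner (K xh) (u j) + S n j \<omega>"
proof -
  have "Ybar K E xh n \<omega> = (1 / real n) *\<^sub>R (real n *\<^sub>R K xh + (\<Sum>i<n. E i \<omega>))"
    unfolding Ybar_def by (simp add: sum.distrib sum_constant_scaleR)
  also have "\<dots> = K xh + (1 / real n) *\<^sub>R (\<Sum>i<n. E i \<omega>)"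
    using n by (simp add: scaleR_add_right)
  finally have "inner (Ybar K E xh n \<omega>) (u j) = inner (K xh) (u j) + (1 / real n) * (\<Sum>i<n. inner (E i \<omega>) (u j))"
    by (simp add: inner_add_left inner_sum_left)
  then show ?thesis unfolding S_def X_def by simp
qed

lemma risk_formula:
  assumes ov: "orthonormal_seq v" and n: "n \<ge> 1"
  shows "sc_risk M K \<sigma> u v E xh n k = (norm (Pk K \<sigma> u v xh k - xh))\<^sup>2
           + (\<Sum>j<k. (inverse (\<sigma> j))\<^sup>2 * (\<integral>\<omega>. (inner (E 0 \<omega>) (u j))\<^sup>2 \<partial>M)) / real n"
proof -
  define d where "d = Pk K \<sigma> u v xh k - xh"
  define Z where "Z \<omega> = (\<Sum>j<k. (inverse (\<sigma> j) * S n j \<omega>) *\<^sub>R v j)" for \<omega>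
  have est: "sc_est K \<sigma> u v E xh n k \<omega> - xh = d + Z \<omega>" for \<omega>
  proof -
    have "sc_est K \<sigma> u v E xh n k \<omega> = (\<Sum>j<k. (inverse (\<sigma> j) * inner (K xh) (u j) + inverse (\<sigma> j) * S n j \<omega>) *\<^sub>R v j)"
      unfolding sc_est_def Ybar_inner[OF n] by (simp add: distrib_left)
    also have "\<dots> = Pk K \<sigma> u v xh k + Z \<omega>"
      unfolding Pk_def Z_def by (simp add: scaleR_add_left sum.distrib)
    finally show ?thesis unfolding d_def by simp
  qed
  have pw: "(norm (sc_est K \<sigma> u v E xh n k \<omega> - xh))\<^sup>2 = (norm d)\<^sup>2
      + (\<Sum>j<k. (2 * inverse (\<sigma> j) * inner d (v j)) * S n j \<omega>)
      + (\<Sum>j<k. (inverse (\<sigma> j))\<^sup>2 * (S n j \<omega>)\<^sup>2)" for \<omega>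
  proof -
    have "(norm (d + Z \<omega>))\<^sup>2 = (norm d)\<^sup>2 + 2 * inner d (Z \<omega>) + (norm (Z \<omega>))\<^sup>2"
      by (simp add: power2_norm_eq_inner inner_add_left inner_add_right inner_commute)
    moreover have "inner d (Z \<omega>) = (\<Sum>j<k. (inverse (\<sigma> j) * S n j \<omega>) * inner d (v j))"
      unfolding Z_def by (rule on_inner_sum2[OF ov]) simp
    moreover have "(norm (Z \<omega>))\<^sup>2 = (\<Sum>j<k. (inverse (\<sigma> j) * S n j \<omega>)\<^sup>2)"
      unfolding Z_def by (rule on_norm_sum[OF ov]) simp
    ultimately show ?thesis unfolding est
      by (simp add: sum_distrib_left power_mult_distrib mult_ac)
  qed
  have i1: "integrable M (\<lambda>\<omega>. \<Sum>j<k. (2 * inverse (\<sigma> j) * inner d (v j)) * S n j \<omega>)"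
    using S_int by simp
  have i2: "integrable M (\<lambda>\<omega>. \<Sum>j<k. (inverse (\<sigma> j))\<^sup>2 * (S n j \<omega>)\<^sup>2)"
    using S_sq_int by simp
  have "sc_risk M K \<sigma> u v E xh n k = (\<integral>\<omega>. (norm d)\<^sup>2
      + (\<Sum>j<k. (2 * inverse (\<sigma> j) * inner d (v j)) * S n j \<omega>)
      + (\<Sum>j<k. (inverse (\<sigma> j))\<^sup>2 * (S n j \<omega>)\<^sup>2) \<partial>M)"
    unfolding sc_risk_def pw ..
  also have "\<dots> = (norm d)\<^sup>2 + (\<integral>\<omega>. (\<Sum>j<k. (2 * inverse (\<sigma> j) * inner d (v j)) * S n j \<omega>) \<partial>M)
      + (\<integral>\<omega>. (\<Sum>j<k. (inverse (\<sigma> j))\<^sup>2 * (S n j \<omega>)\<^sup>2) \<partial>M)"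
    using i1 i2 by (simp add: prob_space)
  also have "(\<integral>\<omega>. (\<Sum>j<k. (2 * inverse (\<sigma> j) * inner d (v j)) * S n j \<omega>) \<partial>M) = 0"
    using S_int S_mean by (simp add: integral_sum)
  also have "(\<integral>\<omega>. (\<Sum>j<k. (inverse (\<sigma> j))\<^sup>2 * (S n j \<omega>)\<^sup>2) \<partial>M)
      = (\<Sum>j<k. (inverse (\<sigma> j))\<^sup>2 * ((\<integral>\<omega>. (inner (E 0 \<omega>) (u j))\<^sup>2 \<partial>M) / real n))"
    using S_sq_int S_sq[OF n] by (simp add: integral_sum)
  also have "\<dots> = (\<Sum>j<k. (inverse (\<sigma> j))\<^sup>2 * (\<integral>\<omega>. (inner (E 0 \<omega>) (u j))\<^sup>2 \<partial>M)) / real n"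
    by (simp add: sum_divide_distrib)
  finally show ?thesis unfolding d_def by simp
qed

end

lemma exists_kn:
  assumes "eventually (\<lambda>n. h n \<ge> 1) sequentially"
  shows "\<exists>kn::nat\<Rightarrow>nat. asymp_ev (\<lambda>n. real (kn n)) h"
proof -
  have "eventually (\<lambda>n. 1 * h n \<le> real (nat \<lceil>h n\<rceil>) \<and> real (nat \<lceil>h n\<rceil>) \<le> 2 * h n) sequentially"
    using assms
  proof eventually_elim
    case (elim n)
    have a: "real (nat \<lceil>h n\<rceil>) = of_int \<lceil>h n\<rceil>" using elim by simp
    have b: "h n \<le> of_int \<lceil>h n\<rceil>" by (rule le_of_int_ceiling)
    have c: "of_int \<lceil>h n\<rceil> \<le> h n + 1" by linarith
    show ?case unfolding a using b c elim by linarith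
  qed
  then show ?thesis unfolding asymp_ev_def by (intro exI[of _ "\<lambda>n. nat \<lceil>h n\<rceil>"] exI[of _ 1] exI[of _ 2]) auto
qed

lemma combine:
  fixes F :: "nat \<Rightarrow> nat \<Rightarrow> real" and g h :: "nat \<Rightarrow> real"
  assumes Fnn: "eventually (\<lambda>n. \<forall>k. F n k \<ge> 0) sequentially"
    and L: "\<exists>c>0. eventually (\<lambda>n. \<forall>k\<ge>1. c * g n \<le> F n k) sequentially"
    and U: "\<And>kn. asymp_ev (\<lambda>n. real (kn n)) h \<Longrightarrow> \<exists>C. eventually (\<lambda>n. F n (kn n) \<le> C * g n) sequentially"
    and E: "\<exists>kn. asymp_ev (\<lambda>n. real (kn n)) h"
    and hpos: "eventually (\<lambda>n. h n > 0) sequentially"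
    and gpos: "eventually (\<lambda>n. g n \<ge> 0) sequentially"
  shows "asymp_ev (\<lambda>n. INF k\<in>{1..}. F n k) g \<and>
     (\<forall>kn. asymp_ev (\<lambda>n. real (kn n)) h \<longrightarrow> asymp_ev (\<lambda>n. F n (kn n)) (\<lambda>n. INF k\<in>{1..}. F n k))"
proof -
  obtain c where c: "c > 0" and Lc: "eventually (\<lambda>n. \<forall>k\<ge>1. c * g n \<le> F n k) sequentially" using L by blast
  have kn_ge1: "eventually (\<lambda>n. kn n \<ge> 1) sequentially" if A: "asymp_ev (\<lambda>n. real (kn n)) h" for kn
  proof -
    obtain c0 C0 where "0 < c0" and ev: "eventually (\<lambda>n. c0 * h n \<le> real (kn n) \<and> real (kn n) \<le> C0 * h n) sequentially"
      using A unfolding asymp_ev_def by blast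
    from ev hpos show ?thesis
    proof eventually_elim
      case (elim n)
      then have "real (kn n) > 0" using \<open>0 < c0\<close> by (smt (verit) mult_pos_pos)
      then show ?case by simp
    qed
  qed
  have INF_low: "eventually (\<lambda>n. c * g n \<le> (INF k\<in>{1..}. F n k)) sequentially"
    using Lc
  proof eventually_elim
    case (elim n)
    show ?case by (rule cINF_greatest) (use elim in auto)
  qed
  have INF_up: "eventually (\<lambda>n. (INF k\<in>{1..}. F n k) \<le> F n (kn n)) sequentially"
    if "asymp_ev (\<lambda>n. real (kn n)) h" for kn
    using kn_ge1[OF that] Fnn
  proof eventually_elim
    case (elim n)
    have "bdd_below (F n ` {1..})" using elim by (intro bdd_belowI[of _ 0]) auto
    then show ?case using elim by (intro cINF_lower) auto
  qed
  obtain kn0 where kn0: "asymp_ev (\<lambda>n. real (kn0 n)) h" using E by blast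
  obtain C where C: "eventually (\<lambda>n. F n (kn0 n) \<le> C * g n) sequentially" using U[OF kn0] by blast
  have part1: "asymp_ev (\<lambda>n. INF k\<in>{1..}. F n k) g"
  proof -
    have "eventually (\<lambda>n. c * g n \<le> (INF k\<in>{1..}. F n k) \<and> (INF k\<in>{1..}. F n k) \<le> max c C * g n) sequentially"
      using INF_low INF_up[OF kn0] C gpos
    proof eventually_elim
      case (elim n)
      have "C * g n \<le> max c C * g n" using elim(4) by (intro mult_right_mono) auto
      then show ?case using elim by linarith
    qed
    then show ?thesis unfolding asymp_ev_def using c by (intro exI[of _ c] exI[of _ "max c C"]) auto
  qed
  have part2: "asymp_ev (\<lambda>n. F n (kn n)) (\<lambda>n. INF k\<in>{1..}. F n k)"
    if kn: "asymp_ev (\<lambda>n. real (kn n)) h" for kn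
  proof -
    obtain C' where C': "eventually (\<lambda>n. F n (kn n) \<le> C' * g n) sequentially" using U[OF kn] by blast
    have "eventually (\<lambda>n. 1 * (INF k\<in>{1..}. F n k) \<le> F n (kn n) \<and> F n (kn n) \<le> max 1 (C'/c) * (INF k\<in>{1..}. F n k)) sequentially"
      using INF_low INF_up[OF kn] C' gpos
    proof eventually_elim
      case (elim n)
      let ?I = "INF k\<in>{1..}. F n k"
      have I0: "?I \<ge> 0" using elim(1,4) c by (smt (verit) mult_nonneg_nonneg)
      have "C' * g n = (C'/c) * (c * g n)" using c by simp
      also have "\<dots> \<le> max 1 (C'/c) * (c * g n)"
        using elim(4) c by (intro mult_right_mono) auto
      also have "\<dots> \<le> max 1 (C'/c) * ?I" using elim(1) by (intro mult_left_mono) auto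
      finally show ?case using elim by simp
    qed
    then show ?thesis unfolding asymp_ev_def by (intro exI[of _ 1] exI[of _ "max 1 (C'/c)"]) auto
  qed
  show ?thesis using part1 part2 by blast
qed

context asy begin

lemma ev_bounds:
  assumes "asymp_ev (\<lambda>n. real (kn n)) h"
  obtains cK CK where "0 < cK" "cK \<le> CK" "eventually (\<lambda>n. cK * h n \<le> real (kn n) \<and> real (kn n) \<le> CK * h n) sequentially"
  using assms unfolding asymp_ev_def by blast

lemma main_asy:
  fixes g h :: "nat \<Rightarrow> real"
  assumes g_def: "g = (\<lambda>n. if q - p < -1 then 1 / real n
                else if q - p = -1 then ln (real n * \<rho>) / real n
                else \<rho> powr ((q + 1 - p) / ((\<nu> + 1) * q + 1 - p))
                     * (1 / real n) powr (\<nu> / (\<nu> + 1 - (p - 1) / q)))"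
    and h_def: "h = (\<lambda>n. if q - p \<le> -1 then (\<rho> * real n) powr (1 / (\<nu> * q))
                   else (\<rho> * real n) powr (1 / ((1 + \<nu>) * q + 1 - p)))"
  shows "\<exists>c>0. eventually (\<lambda>n. \<forall>k\<ge>1. c * g n \<le> b k + V k / real n) sequentially"
    and "\<And>kn. asymp_ev (\<lambda>n. real (kn n)) h \<Longrightarrow> \<exists>C. eventually (\<lambda>n. b (kn n) + V (kn n) / real n \<le> C * g n) sequentially"
    and "eventually (\<lambda>n. h n \<ge> 1) sequentially"
    and "eventually (\<lambda>n. g n \<ge> 0) sequentially"
proof -
  have ev1: "eventually (\<lambda>n. (n::nat) \<ge> 1) sequentially" by (rule eventually_ge_at_top)
  have e1: "1/(\<nu>*q) > 0" using qnu by (simp add: mult.commute)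
  define e1' where "e1' = (q + 1 - p) / ((\<nu> + 1) * q + 1 - p)"
  { assume r: "q - p > -1"
    have Dq: "(1 + \<nu>) * q + 1 - p = D" using D_def[OF r] by simp
    have gr: "g n = \<rho> powr e1' * real n powr (-(q*\<nu>)/D)" if "n \<ge> 1" for n
    proof -
      have "\<nu> / (\<nu> + 1 - (p - 1) / q) = q*\<nu>/D"
        using q D_pos[OF r] unfolding Dq[symmetric] by (simp add: field_simps)
      moreover have "(1 / real n) powr x = real n powr (-x)" for x
        using that by (simp add: powr_minus_divide powr_divide)
      ultimately show ?thesis using r unfolding g_def e1'_def by simp
    qed
    have hr: "h n = (\<rho> * real n) powr (1/D)" for n using r unfolding h_def Dq by simp
    note Dq gr hr }
  note rgt = this
  show "\<exists>c>0. eventually (\<lambda>n. \<forall>k\<ge>1. c * g n \<le> b k + V k / real n) sequentially"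
  proof (cases "q - p < -1")
    case True
    have "eventually (\<lambda>n. \<forall>k\<ge>1. cV * g n \<le> b k + V k / real n) sequentially"
      using ev1 by eventually_elim (use L1[OF True] True in \<open>auto simp: g_def\<close>)
    then show ?thesis using cV by blast
  next
    case F1: False
    show ?thesis
    proof (cases "q - p = -1")
      case True
      then show ?thesis using L2[OF True] by (simp add: g_def)
    next
      case False
      then have r: "q - p > -1" using F1 by simp
      obtain c where c: "c > 0" and Lc: "\<forall>n\<ge>1. \<forall>k\<ge>1. c * real n powr (-(q*\<nu>)/D) \<le> b k + V k / real n"
        using L3[OF r] by blast
      have "eventually (\<lambda>n. \<forall>k\<ge>1. (c / \<rho> powr e1') * g n \<le> b k + V k / real n) sequentially"
        using ev1
      proof eventually_elim
        case (elim n)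
        have "(c / \<rho> powr e1') * g n = c * real n powr (-(q*\<nu>)/D)"
          using rgt(2)[OF r elim] \<rho> by simp
        then show ?case using Lc elim by simp
      qed
      moreover have "c / \<rho> powr e1' > 0" using c \<rho> by simp
      ultimately show ?thesis by blast
    qed
  qed
  show "eventually (\<lambda>n. h n \<ge> 1) sequentially"
  proof (cases "q - p \<le> -1")
    case True
    have "eventually (\<lambda>n. 1 \<le> (\<rho> * real n) powr (1 / (\<nu> * q))) sequentially"
      using \<rho> e1 by real_asymp
    then show ?thesis using True by (simp add: h_def)
  next
    case False
    then have r: "q - p > -1" by simp
    have e: "1/D > 0" using D_pos[OF r] by simp
    have "eventually (\<lambda>n. 1 \<le> (\<rho> * real n) powr (1 / D)) sequentially"
      using \<rho> e by real_asymp
    then show ?thesis using rgt(3)[OF r] by simp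
  qed
  show "eventually (\<lambda>n. g n \<ge> 0) sequentially"
  proof (cases "q - p = -1")
    case True
    have "eventually (\<lambda>n. 0 \<le> ln (real n * \<rho>)) sequentially" using \<rho> by real_asymp
    then show ?thesis
      by eventually_elim (use True in \<open>simp add: g_def\<close>)
  next
    case False
    then show ?thesis unfolding g_def by (intro always_eventually allI) auto
  qed
  show "\<exists>C. eventually (\<lambda>n. b (kn n) + V (kn n) / real n \<le> C * g n) sequentially"
    if kn: "asymp_ev (\<lambda>n. real (kn n)) h" for kn
  proof -
    obtain cK CK where cK: "0 < cK" "cK \<le> CK" and evb: "eventually (\<lambda>n. cK * h n \<le> real (kn n) \<and> real (kn n) \<le> CK * h n) sequentially"
      using ev_bounds[OF kn] by blast
    show ?thesis
    proof (cases "q - p < -1")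
      case True
      obtain C where C: "\<forall>n\<ge>1. \<forall>k. cK * (\<rho> * real n) powr (1/(\<nu>*q)) \<le> real k
            \<longrightarrow> b k + V k / real n \<le> C * (1 / real n)" using U1[OF True cK(1)] by blast
      have "eventually (\<lambda>n. b (kn n) + V (kn n) / real n \<le> C * g n) sequentially"
        using evb ev1
      proof eventually_elim
        case (elim n)
        then show ?case using C True by (simp add: g_def h_def)
      qed
      then show ?thesis by blast
    next
      case F1: False
      show ?thesis
      proof (cases "q - p = -1")
        case True
        obtain C where C: "eventually (\<lambda>n. \<forall>k. cK * (\<rho> * real n) powr (1/(\<nu>*q)) \<le> real k \<and> real k \<le> CK * (\<rho> * real n) powr (1/(\<nu>*q))
            \<longrightarrow> b k + V k / real n \<le> C * (ln (real n * \<rho>) / real n)) sequentially"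
          using U2[OF True cK(1)] cK by fastforce
        have "eventually (\<lambda>n. b (kn n) + V (kn n) / real n \<le> C * g n) sequentially"
          using evb C
        proof eventually_elim
          case (elim n)
          then show ?case using True by (simp add: g_def h_def)
        qed
        then show ?thesis by blast
      next
        case False
        then have r: "q - p > -1" using F1 by simp
        obtain C where C: "\<forall>n\<ge>1. \<forall>k. cK * (\<rho> * real n) powr (1/D) \<le> real k \<and> real k \<le> CK * (\<rho> * real n) powr (1/D)
            \<longrightarrow> b k + V k / real n \<le> C * real n powr (-(q*\<nu>)/D)" using U3[OF r cK(1)] by blast
        have "eventually (\<lambda>n. b (kn n) + V (kn n) / real n \<le> (C / \<rho> powr e1') * g n) sequentially"
          using evb ev1
        proof eventually_elim
          case (elim n)
          have "(C / \<rho> powr e1') * g n = C * real n powr (-(q*\<nu>)/D)"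
            using rgt(2)[OF r elim(2)] \<rho> by simp
          then show ?case using C elim rgt(3)[OF r] by simp
        qed
        then show ?thesis by blast
      qed
    qed
  qed
qed

end

lemma powr_sq_swap: "s > 0 \<Longrightarrow> (s powr \<nu>)\<^sup>2 = (s\<^sup>2) powr \<nu>" for s \<nu> :: real
proof -
  assume s: "s > 0"
  have "(s\<^sup>2) powr \<nu> = (s * s) powr \<nu>" by (simp add: power2_eq_square)
  also have "\<dots> = s powr \<nu> * s powr \<nu>" using s by (simp add: powr_mult)
  finally show ?thesis by (simp add: power2_eq_square)
qed

lemma term_bounds:
  fixes x s2 a cs Cs ca Ca q p :: real
  assumes "cs > 0" "ca > 0" "x > 0" "s2 > 0"
    and "cs * x powr (-q) \<le> s2" "s2 \<le> Cs * x powr (-q)"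
    and "ca * x powr (-p) \<le> a" "a \<le> Ca * x powr (-p)"
  shows "(ca/Cs) * x powr (q-p) \<le> a / s2 \<and> a / s2 \<le> (Ca/cs) * x powr (q-p)"
proof -
  have xq: "x powr (-p) / x powr (-q) = x powr (q-p)" using assms(3) by (simp add: powr_diff[symmetric])
  have Cs: "Cs > 0" using assms(4,6) assms(3) by (smt (verit) mult_nonpos_nonneg powr_ge_zero)
  have "0 < ca * x powr (-p)" using assms by simp
  then have a0: "0 \<le> a" using assms(7) by linarith
  have "(ca * x powr (-p)) / (Cs * x powr (-q)) \<le> a / s2"
    using assms Cs a0 by (intro frac_le) auto
  moreover have "(ca * x powr (-p)) / (Cs * x powr (-q)) = (ca/Cs) * x powr (q-p)"
    unfolding xq[symmetric] by (simp only: times_divide_times_eq)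
  moreover have "a / s2 \<le> (Ca * x powr (-p)) / (cs * x powr (-q))"
  proof (rule frac_le)
    show "0 \<le> Ca * x powr (-p)" using assms(7,8) assms(2,3) by (smt (verit) mult_pos_pos powr_gt_zero)
  qed (use assms in auto)
  moreover have "(Ca * x powr (-p)) / (cs * x powr (-q)) = (Ca/cs) * x powr (q-p)"
    unfolding xq[symmetric] by (simp only: times_divide_times_eq)
  ultimately show ?thesis by simp
qed

theorem theorem1:
  fixes M :: "'w measure"
    and K :: "'x::{real_inner,banach,second_countable_topology} \<Rightarrow> 'y::{real_inner,banach,second_countable_topology}"
    and \<sigma> :: "nat \<Rightarrow> real" and u :: "nat \<Rightarrow> 'y" and v :: "nat \<Rightarrow> 'x"
    and E :: "nat \<Rightarrow> 'w \<Rightarrow> 'y"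
    and p q \<nu> \<rho> :: real
  assumes lin: "bounded_linear K"
    and cpt: "compact (closure (K ` cball 0 1))"
    and dense: "closure (range K) = UNIV"
    and u_basis: "orthonormal_basis_of u UNIV"
    and v_basis: "orthonormal_basis_of v (ker_perp K)"
    and \<sigma>_pos: "\<And>j. \<sigma> j > 0"
    and \<sigma>_mono: "decseq \<sigma>"
    and \<sigma>_lim: "\<sigma> \<longlonglongrightarrow> 0"
    and svd: "\<And>j. K (v j) = \<sigma> j *\<^sub>R u j"
    and P: "prob_space M"
    and meas: "\<And>i. E i \<in> borel_measurable M"
    and indep: "prob_space.indep_vars M (\<lambda>_. borel) E UNIV"
    and ident: "\<And>i. distr M borel (E i) = distr M borel (E 0)"
    and integ: "integrable M (E 0)"
    and mean0: "(\<integral>\<omega>. E 0 \<omega> \<partial>M) = 0"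
    and mom2: "integrable M (\<lambda>\<omega>. (norm (E 0 \<omega>))\<^sup>2)"
    and q_pos: "q > 0" and p_gt: "p > 1"
    and \<sigma>_rate: "asymp_all (\<lambda>j. (\<sigma> j)\<^sup>2) (\<lambda>j. real (Suc j) powr (- q))"
    and noise_rate: "asymp_all (\<lambda>j. \<integral>\<omega>. (inner (E 0 \<omega>) (u j))\<^sup>2 \<partial>M) (\<lambda>j. real (Suc j) powr (- p))"
    and \<nu>_pos: "\<nu> > 0" and \<rho>_pos: "\<rho> > 0"
  shows "asymp_ev
           (\<lambda>n. INF k\<in>{1..}. SUP xh\<in>source_set \<sigma> v \<nu> \<rho>. sc_risk M K \<sigma> u v E xh n k)
           (\<lambda>n. if q - p < -1 then 1 / real n
                else if q - p = -1 then ln (real n * \<rho>) / real n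
                else \<rho> powr ((q + 1 - p) / ((\<nu> + 1) * q + 1 - p))
                     * (1 / real n) powr (\<nu> / (\<nu> + 1 - (p - 1) / q)))
       \<and> (\<forall>kn :: nat \<Rightarrow> nat.
            asymp_ev (\<lambda>n. real (kn n))
              (\<lambda>n. if q - p \<le> -1 then (\<rho> * real n) powr (1 / (\<nu> * q))
                   else (\<rho> * real n) powr (1 / ((1 + \<nu>) * q + 1 - p)))
            \<longrightarrow> asymp_ev
                 (\<lambda>n. SUP xh\<in>source_set \<sigma> v \<nu> \<rho>. sc_risk M K \<sigma> u v E xh n (kn n))
                 (\<lambda>n. INF k\<in>{1..}. SUP xh\<in>source_set \<sigma> v \<nu> \<rho>. sc_risk M K \<sigma> u v E xh n k))"
  
proof -
  have ou: "orthonormal_seq u" using u_basis by (simp add: orthonormal_basis_of_def)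
  have ov: "orthonormal_seq v" using v_basis by (simp add: orthonormal_basis_of_def)
  interpret N: noise M E u
    by (intro noise.intro noise_axioms.intro P meas indep ident integ mean0 mom2 ou)
  define a where "a j = (\<integral>\<omega>. (inner (E 0 \<omega>) (u j))\<^sup>2 \<partial>M)" for j
  define b where "b k = \<rho>\<^sup>2 * (\<sigma> k powr \<nu>)\<^sup>2" for k
  define V where "V k = (\<Sum>j<k. (inverse (\<sigma> j))\<^sup>2 * a j)" for k
  have risk: "sc_risk M K \<sigma> u v E xh n k = (norm (Pk K \<sigma> u v xh k - xh))\<^sup>2 + V k / real n"
    if "n \<ge> 1" for xh n k
    using N.risk_formula[OF ov that] unfolding V_def a_def by simp
  have SUPeq: "(SUP xh\<in>source_set \<sigma> v \<nu> \<rho>. sc_risk M K \<sigma> u v E xh n k) = b k + V k / real n"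
    if n: "n \<ge> 1" for n k
  proof -
    define xh0 where "xh0 = (\<rho> * \<sigma> k powr \<nu>) *\<^sub>R v k"
    have x0: "xh0 \<in> source_set \<sigma> v \<nu> \<rho>"
      unfolding xh0_def by (rule source_bias_attained(1)[OF lin ou ov \<sigma>_pos svd \<rho>_pos])
    have r0: "sc_risk M K \<sigma> u v E xh0 n k = b k + V k / real n"
      unfolding risk[OF n] b_def xh0_def source_bias_attained(2)[OF lin ou ov \<sigma>_pos svd \<rho>_pos] ..
    show ?thesis
    proof (rule cSup_eq_maximum)
      show "b k + V k / real n \<in> (\<lambda>xh. sc_risk M K \<sigma> u v E xh n k) ` source_set \<sigma> v \<nu> \<rho>"
        using x0 r0 by (metis image_eqI)
      fix y assume "y \<in> (\<lambda>xh. sc_risk M K \<sigma> u v E xh n k) ` source_set \<sigma> v \<nu> \<rho>"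
      then obtain xh where xh: "xh \<in> source_set \<sigma> v \<nu> \<rho>" and y: "y = sc_risk M K \<sigma> u v E xh n k" by blast
      have "(norm (Pk K \<sigma> u v xh k - xh))\<^sup>2 \<le> \<rho>\<^sup>2 * (\<sigma> k powr \<nu>)\<^sup>2"
        using source_bias_le[OF lin ou ov \<sigma>_pos \<sigma>_mono svd xh] \<nu>_pos by simp
      then show "y \<le> b k + V k / real n" unfolding y risk[OF n] b_def by simp
    qed
  qed
  obtain cs Cs where cs: "0 < cs" "cs \<le> Cs" and sb: "\<And>j. cs * real (Suc j) powr (- q) \<le> (\<sigma> j)\<^sup>2 \<and> (\<sigma> j)\<^sup>2 \<le> Cs * real (Suc j) powr (- q)"
    using \<sigma>_rate unfolding asymp_all_def by blast
  obtain ca Ca where ca: "0 < ca" "ca \<le> Ca" and ab: "\<And>j. ca * real (Suc j) powr (- p) \<le> a j \<and> a j \<le> Ca * real (Suc j) powr (- p)"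
    using noise_rate unfolding asymp_all_def a_def by blast
  have tb: "(ca/Cs) * real (Suc j) powr (q-p) \<le> (inverse (\<sigma> j))\<^sup>2 * a j \<and> (inverse (\<sigma> j))\<^sup>2 * a j \<le> (Ca/cs) * real (Suc j) powr (q-p)" for j
  proof -
    have "(inverse (\<sigma> j))\<^sup>2 * a j = a j / (\<sigma> j)\<^sup>2" by (simp add: power_inverse divide_inverse mult.commute)
    moreover have "(ca/Cs) * real (Suc j) powr (q-p) \<le> a j / (\<sigma> j)\<^sup>2 \<and> a j / (\<sigma> j)\<^sup>2 \<le> (Ca/cs) * real (Suc j) powr (q-p)"
      using sb[of j] ab[of j] cs ca \<sigma>_pos[of j] by (intro term_bounds) auto
    ultimately show ?thesis by simp
  qed
  have bb: "(\<rho>\<^sup>2 * cs powr \<nu>) * real (Suc k) powr (-(q*\<nu>)) \<le> b k \<and> b k \<le> (\<rho>\<^sup>2 * Cs powr \<nu>) * real (Suc k) powr (-(q*\<nu>))" for k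
  proof -
    have e: "(c * real (Suc k) powr (-q)) powr \<nu> = c powr \<nu> * real (Suc k) powr (-(q*\<nu>))" if "c > 0" for c
      using that by (simp add: powr_mult powr_powr)
    have Cs0: "Cs > 0" using cs by simp
    have bk: "b k = \<rho>\<^sup>2 * ((\<sigma> k)\<^sup>2) powr \<nu>" unfolding b_def using powr_sq_swap[OF \<sigma>_pos[of k]] by simp
    have "(cs * real (Suc k) powr (-q)) powr \<nu> \<le> ((\<sigma> k)\<^sup>2) powr \<nu>"
      using sb[of k] cs \<nu>_pos by (intro powr_mono2) auto
    moreover have "((\<sigma> k)\<^sup>2) powr \<nu> \<le> (Cs * real (Suc k) powr (-q)) powr \<nu>"
      using sb[of k] \<nu>_pos \<sigma>_pos[of k] by (intro powr_mono2) auto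
    ultimately show ?thesis unfolding bk e[OF cs(1)] e[OF Cs0] using \<rho>_pos
      by (simp add: mult.assoc mult_left_mono)
  qed
  have vv: "(ca/Cs) * (\<Sum>j<k. real (Suc j) powr (q-p)) \<le> V k \<and> V k \<le> (Ca/cs) * (\<Sum>j<k. real (Suc j) powr (q-p))" for k
  proof -
    have "(ca/Cs) * (\<Sum>j<k. real (Suc j) powr (q-p)) = (\<Sum>j<k. (ca/Cs) * real (Suc j) powr (q-p))"
      by (simp add: sum_distrib_left)
    also have "\<dots> \<le> V k" unfolding V_def using tb by (intro sum_mono) auto
    finally have 1: "(ca/Cs) * (\<Sum>j<k. real (Suc j) powr (q-p)) \<le> V k" .
    have "V k \<le> (\<Sum>j<k. (Ca/cs) * real (Suc j) powr (q-p))" unfolding V_def using tb by (intro sum_mono) auto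
    also have "\<dots> = (Ca/cs) * (\<Sum>j<k. real (Suc j) powr (q-p))" by (simp add: sum_distrib_left)
    finally show ?thesis using 1 by simp
  qed
  interpret A: asy b V q p \<nu> \<rho> "\<rho>\<^sup>2 * cs powr \<nu>" "\<rho>\<^sup>2 * Cs powr \<nu>" "ca/Cs" "Ca/cs"
  proof
    show "q > 0" "\<nu> > 0" "\<rho> > 0" using q_pos \<nu>_pos \<rho>_pos by auto
    show "\<rho>\<^sup>2 * cs powr \<nu> > 0" "\<rho>\<^sup>2 * Cs powr \<nu> > 0" "ca/Cs > 0" "Ca/cs > 0"
      using cs ca \<rho>_pos by auto
  qed (use bb vv in auto)
  define g where "g = (\<lambda>n. if q - p < -1 then 1 / real n
                else if q - p = -1 then ln (real n * \<rho>) / real n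
                else \<rho> powr ((q + 1 - p) / ((\<nu> + 1) * q + 1 - p))
                     * (1 / real n) powr (\<nu> / (\<nu> + 1 - (p - 1) / q)))"
  define h where "h = (\<lambda>n. if q - p \<le> -1 then (\<rho> * real n) powr (1 / (\<nu> * q))
                   else (\<rho> * real n) powr (1 / ((1 + \<nu>) * q + 1 - p)))"
  note MA = A.main_asy[OF g_def h_def]
  define F where "F n k = (SUP xh\<in>source_set \<sigma> v \<nu> \<rho>. sc_risk M K \<sigma> u v E xh n k)" for n k
  have ev1: "eventually (\<lambda>n. (n::nat) \<ge> 1) sequentially" by (rule eventually_ge_at_top)
  have FG: "eventually (\<lambda>n. \<forall>k. F n k = b k + V k / real n) sequentially"
    using ev1 by eventually_elim (simp add: F_def SUPeq)
  have C: "asymp_ev (\<lambda>n. INF k\<in>{1..}. F n k) g \<and>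
     (\<forall>kn. asymp_ev (\<lambda>n. real (kn n)) h \<longrightarrow> asymp_ev (\<lambda>n. F n (kn n)) (\<lambda>n. INF k\<in>{1..}. F n k))"
  proof (rule combine)
    show "eventually (\<lambda>n. \<forall>k. F n k \<ge> 0) sequentially"
      using FG ev1 by eventually_elim (simp add: A.b_nonneg A.V_nonneg)
    obtain c where c: "c > 0" and Lc: "eventually (\<lambda>n. \<forall>k\<ge>1. c * g n \<le> b k + V k / real n) sequentially"
      using MA(1) by blast
    have "eventually (\<lambda>n. \<forall>k\<ge>1. c * g n \<le> F n k) sequentially"
      using Lc FG by eventually_elim simp
    then show "\<exists>c>0. eventually (\<lambda>n. \<forall>k\<ge>1. c * g n \<le> F n k) sequentially" using c by blast
    show "\<exists>C. eventually (\<lambda>n. F n (kn n) \<le> C * g n) sequentially"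
      if knh: "asymp_ev (\<lambda>n. real (kn n)) h" for kn
    proof -
      obtain C where "eventually (\<lambda>n. b (kn n) + V (kn n) / real n \<le> C * g n) sequentially"
        using MA(2)[OF knh] by blast
      then have "eventually (\<lambda>n. F n (kn n) \<le> C * g n) sequentially"
        using FG by eventually_elim simp
      then show ?thesis by blast
    qed
    show "\<exists>kn. asymp_ev (\<lambda>n. real (kn n)) h" by (rule exists_kn[OF MA(3)])
    show "eventually (\<lambda>n. h n > 0) sequentially" using MA(3) by eventually_elim simp
    show "eventually (\<lambda>n. g n \<ge> 0) sequentially" by (rule MA(4))
  qed
  then show ?thesis unfolding F_def g_def h_def .
qed

end
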